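(* Let $\Gamma^i_k$ and $\Gamma^j_k$ be invertible (positive definite) covariance matrices and $\omega\in[0,1]$. The division of Gaussian densities \[ \frac{\mathcal{N}(\mathbf{x}_k; \hat{\mathbf{x}}^{i}_k, \Gamma^{i}_k)\, \mathcal{N}(\mathbf{x}_k; \hat{\mathbf{x}}^{j}_k, \Gamma^{j}_k)}{\mathcal{N}(\mathbf{x}_k; \hat{\mathbf{x}}^{eq}_k, \Gamma^{eq}_k)} \propto \mathcal{N}(\mathbf{x}_k; \hat{\mathbf{x}}^f_k, \Gamma^f_k), \] where $(\hat{\mathbf{x}}^{eq}_k,\Gamma^{eq}_k)$ is the moment-matched Gaussian approximation of the mixture $\omega\,\mathcal{N}(\hat{\mathbf{x}}^i_k,\Gamma^i_k)+(1-\omega)\,\mathcal{N}(\hat{\mathbf{x}}^j_k,\Gamma^j_k)$, is always valid; that is, $\Gamma^{eq}_k - \left({\Gamma^{i}_k}^{-1} + {\Gamma^{j}_k}^{-1}\right)^{-1} \succ \mathbf{0}$, so that $\Gamma^f_k = \left({\Gamma^{i}_k}^{-1} + {\Gamma^{j}_k}^{-1} - {\Gamma^{eq}_k}^{-1}\right)^{-1}$ is a valid covariance.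
   Context: Harmonic mean density (HMD) fusion of two local Gaussian track densities $p(\mathbf{x}_k|\mathbf{z}^i_k)=\mathcal{N}(\mathbf{x}_k;\hat{\mathbf{x}}^i_k,\Gamma^i_k)$ and $p(\mathbf{x}_k|\mathbf{z}^j_k)=\mathcal{N}(\mathbf{x}_k;\hat{\mathbf{x}}^j_k,\Gamma^j_k)$: the fused density is their product divided by the weighted mixture of the two, and the denominator mixture is approximated by a single Gaussian with mean $\hat{\mathbf{x}}^{eq}_k=\omega\hat{\mathbf{x}}^i_k+(1-\omega)\hat{\mathbf{x}}^j_k$ and covariance $\Gamma^{eq}_k=\omega[\Gamma^i_k+(\hat{\mathbf{x}}^{eq}_k-\hat{\mathbf{x}}^i_k)(\hat{\mathbf{x}}^{eq}_k-\hat{\mathbf{x}}^i_k)^T]+(1-\omega)[\Gamma^j_k+(\hat{\mathbf{x}}^{eq}_k-\hat{\mathbf{x}}^j_k)(\hat{\mathbf{x}}^{eq}_k-\hat{\mathbf{x}}^j_k)^T]$. The fused mean is $\hat{\mathbf{x}}^f_k=\Gamma^f_k[{\Gamma^i_k}^{-1}\hat{\mathbf{x}}^i_k+{\Gamma^j_k}^{-1}\hat{\mathbf{x}}^j_k-{\Gamma^{eq}_k}^{-1}\hat{\mathbf{x}}^{eq}_k]$. Division of a Gaussian (here the product density with covariance $\Gamma^{num}_k=({\Gamma^i_k}^{-1}+{\Gamma^j_k}^{-1})^{-1}$) by another Gaussian yields a valid Gaussian only if the divisor's covariance dominates, $\Gamma^{eq}_k \succeq \Gamma^{num}_k$. *)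

theory Defs
  imports "HOL-Analysis.Analysis"
begin

definition pos_def :: "real^'n^'n \<Rightarrow> bool" where
  "pos_def A \<longleftrightarrow> transpose A = A \<and> (\<forall>x. x \<noteq> 0 \<longrightarrow> x \<bullet> (A *v x) > 0)"

definition outer :: "real^'n \<Rightarrow> real^'n \<Rightarrow> real^'n^'n" where
  "outer v w = (\<chi> i j. v $ i * w $ j)"

text \<open>Moment-matched mean and covariance of the mixture
  w N(xi,Gi) + (1-w) N(xj,Gj).\<close>
definition eq_mean :: "real \<Rightarrow> real^'n \<Rightarrow> real^'n \<Rightarrow> real^'n" where
  "eq_mean w xi xj = w *\<^sub>R xi + (1 - w) *\<^sub>R xj"

definition eq_cov :: "real \<Rightarrow> real^'n \<Rightarrow> real^'n^'n \<Rightarrow> real^'n \<Rightarrow> real^'n^'n \<Rightarrow> real^'n^'n" where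
  "eq_cov w xi Gi xj Gj =
     (let xe = eq_mean w xi xj in
        w *\<^sub>R (Gi + outer (xe - xi) (xe - xi)) + (1 - w) *\<^sub>R (Gj + outer (xe - xj) (xe - xj)))"

end

theory Submission
  imports Defs
begin

definition Q :: "real^'n^'n \<Rightarrow> real^'n \<Rightarrow> real" where
  "Q A x = x \<bullet> (A *v x)"

lemma Q_add: "Q (A + B) x = Q A x + Q B x"
  by (simp add: Q_def matrix_vector_mult_add_rdistrib inner_add_right)

lemma Q_diff: "Q (A - B) x = Q A x - Q B x"
  by (simp add: Q_def matrix_vector_mult_diff_rdistrib inner_diff_right)

lemma scaleR_mv: "((c::real) *\<^sub>R (A::real^'n^'m)) *v x = c *\<^sub>R (A *v x)"
  by (simp add: vec_eq_iff matrix_vector_mult_def sum_distrib_left mult.assoc)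

lemma Q_scale: "Q (c *\<^sub>R A) x = c * Q A x"
  by (simp add: Q_def scaleR_mv)

lemma outer_mv: "outer v v *v x = (v \<bullet> x) *\<^sub>R v"
  by (simp add: vec_eq_iff outer_def matrix_vector_mult_def inner_vec_def sum_distrib_left mult_ac)

lemma Q_outer: "Q (outer v v) x = (v \<bullet> x)^2"
  by (simp add: Q_def outer_mv power2_eq_square inner_commute)

lemma transpose_add: "transpose (A + B) = transpose A + transpose (B::real^'n^'n)"
  by (simp add: vec_eq_iff transpose_def)

lemma transpose_diff: "transpose (A - B) = transpose A - transpose (B::real^'n^'n)"
  by (simp add: vec_eq_iff transpose_def)

lemma transpose_outer: "transpose (outer v v) = outer v v"
  by (simp add: vec_eq_iff transpose_def outer_def mult.commute)

lemma sym_inner: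
  assumes "transpose Y = (Y::real^'n^'n)"
  shows "v \<bullet> (Y *v u) = u \<bullet> (Y *v v)"
proof -
  have "v \<bullet> (Y *v u) = (v v* Y) \<bullet> u" by (simp add: dot_lmul_matrix)
  also have "v v* Y = transpose Y *v v" by simp
  also have "\<dots> = Y *v v" using assms by simp
  finally show ?thesis by (simp add: inner_commute)
qed

lemma pd_Q: "pos_def A \<longleftrightarrow> transpose A = A \<and> (\<forall>x. x \<noteq> 0 \<longrightarrow> Q A x > 0)"
  by (simp add: pos_def_def Q_def)

lemma pd_nonneg: "pos_def A \<Longrightarrow> Q A x \<ge> 0"
  by (cases "x = 0") (auto simp: pd_Q Q_def less_imp_le)

lemma pd_invertible:
  assumes "pos_def X" shows "invertible X"
proof -
  have "\<forall>x. X *v x = 0 \<longrightarrow> x = 0"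
    using assms by (auto simp: pos_def_def)
  then show ?thesis
    using matrix_left_invertible_ker invertible_left_inverse by blast
qed

lemma inv_props:
  assumes "invertible A"
  shows "A ** matrix_inv A = mat 1" "matrix_inv A ** A = mat 1"
proof -
  have "\<exists>A'. A ** A' = mat 1 \<and> A' ** A = mat 1" using assms invertible_def by blast
  from someI_ex[OF this] show "A ** matrix_inv A = mat 1" "matrix_inv A ** A = mat 1"
    by (simp_all add: matrix_inv_def)
qed

lemma inv_mv1: "invertible A \<Longrightarrow> A *v (matrix_inv A *v z) = (z::real^'n)"
  by (simp add: matrix_vector_mul_assoc inv_props)

lemma inv_mv2: "invertible A \<Longrightarrow> matrix_inv A *v (A *v z) = (z::real^'n)"
  by (simp add: matrix_vector_mul_assoc inv_props)

lemma inv_unique: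
  fixes A B :: "real^'n^'n"
  assumes "A ** B = mat 1" "B ** A = mat 1"
  shows "matrix_inv B = A"
proof -
  have iB: "invertible B" using assms invertible_def by blast
  have "matrix_inv B = matrix_inv B ** (B ** A)" using assms by simp
  also have "\<dots> = (matrix_inv B ** B) ** A" by (simp add: matrix_mul_assoc)
  also have "\<dots> = A" using inv_props[OF iB] by simp
  finally show ?thesis .
qed

lemma inv_inv: "invertible (A::real^'n^'n) \<Longrightarrow> matrix_inv (matrix_inv A) = A"
  using inv_props inv_unique by blast

lemma inv_sym:
  fixes X :: "real^'n^'n"
  assumes "invertible X" "transpose X = X"
  shows "transpose (matrix_inv X) = matrix_inv X"
proof -
  let ?Xi = "matrix_inv X"
  have "transpose ?Xi ** X = mat 1"
    using inv_props(1)[OF assms(1)] matrix_transpose_mul[of X ?Xi] assms(2) by simp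
  then have "transpose ?Xi = transpose ?Xi ** (X ** ?Xi)"
    using inv_props[OF assms(1)] by simp
  also have "\<dots> = (transpose ?Xi ** X) ** ?Xi" by (simp add: matrix_mul_assoc)
  also have "\<dots> = ?Xi" using \<open>transpose ?Xi ** X = mat 1\<close> by simp
  finally show ?thesis .
qed

lemma pd_inv:
  fixes X :: "real^'n^'n"
  assumes "pos_def X" shows "pos_def (matrix_inv X)"
proof -
  have iX: "invertible X" using pd_invertible assms by blast
  have sX: "transpose X = X" using assms by (simp add: pos_def_def)
  show ?thesis unfolding pd_Q
  proof (intro conjI allI impI)
    show "transpose (matrix_inv X) = matrix_inv X" using inv_sym iX sX by blast
    fix z :: "real^'n" assume z: "z \<noteq> 0"
    define u where "u = matrix_inv X *v z"
    have Xu: "X *v u = z" using inv_mv1[OF iX] u_def by simp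
    have "u \<noteq> 0" using Xu z by auto
    then have "Q X u > 0" using assms by (simp add: pd_Q)
    moreover have "Q (matrix_inv X) z = Q X u"
      unfolding Q_def using Xu u_def by (simp add: inner_commute)
    ultimately show "Q (matrix_inv X) z > 0" by simp
  qed
qed

lemma pd_add: "pos_def A \<Longrightarrow> pos_def B \<Longrightarrow> pos_def (A + B)"
  by (auto simp: pd_Q Q_add transpose_add add_pos_pos)

lemma antitone:
  fixes X Y :: "real^'n^'n"
  assumes X: "pos_def X" and Y: "pos_def Y" and XY: "pos_def (X - Y)"
  shows "pos_def (matrix_inv Y - matrix_inv X)"
proof -
  have iX: "invertible X" and iY: "invertible Y" using pd_invertible X Y by auto
  have sX: "transpose X = X" and sY: "transpose Y = Y" using X Y by (auto simp: pos_def_def)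
  show ?thesis unfolding pd_Q
  proof (intro conjI allI impI)
    show "transpose (matrix_inv Y - matrix_inv X) = matrix_inv Y - matrix_inv X"
      using inv_sym[OF iX sX] inv_sym[OF iY sY] by (simp add: transpose_diff)
    fix z :: "real^'n" assume z: "z \<noteq> 0"
    define u where "u = matrix_inv X *v z"
    define v where "v = matrix_inv Y *v z"
    have Xu: "X *v u = z" using inv_mv1[OF iX] u_def by simp
    have Yv: "Y *v v = z" using inv_mv1[OF iY] v_def by simp
    have "u \<noteq> 0" using Xu z by auto
    then have "Q (X - Y) u > 0" using XY by (simp add: pd_Q)
    then have gt: "Q X u > Q Y u" by (simp add: Q_diff)
    have qX: "Q (matrix_inv X) z = Q X u"
      unfolding Q_def using Xu u_def by (simp add: inner_commute)
    have qY: "Q (matrix_inv Y) z = Q Y v"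
      unfolding Q_def using Yv v_def by (simp add: inner_commute)
    have "Q Y (u - v) \<ge> 0" using pd_nonneg Y by blast
    moreover have "Q Y (u - v) = Q Y u - u \<bullet> z - v \<bullet> (Y *v u) + Q Y v"
      unfolding Q_def using Yv
      by (simp add: matrix_vector_mult_diff_distrib inner_diff_left inner_diff_right)
    moreover have "v \<bullet> (Y *v u) = u \<bullet> z" using sym_inner[OF sY] Yv by metis
    moreover have "u \<bullet> z = Q X u" unfolding Q_def using Xu by simp
    ultimately have "Q Y v > Q X u" using gt by linarith
    then show "Q (matrix_inv Y - matrix_inv X) z > 0" using qX qY by (simp add: Q_diff)
  qed
qed

theorem proposition2:
  fixes Gi Gj :: "real^'n^'n" and xi xj :: "real^'n" and w :: real
  assumes "pos_def Gi" and "pos_def Gj" and "0 \<le> w" and "w \<le> 1"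
  shows "pos_def (eq_cov w xi Gi xj Gj - matrix_inv (matrix_inv Gi + matrix_inv Gj))
       \<and> pos_def (matrix_inv Gi + matrix_inv Gj - matrix_inv (eq_cov w xi Gi xj Gj))"
proof -
  define M where "M = matrix_inv Gi + matrix_inv Gj"
  define H where "H = matrix_inv M"
  define C where "C = eq_cov w xi Gi xj Gj"
  have iGi: "invertible Gi" and iGj: "invertible Gj" using pd_invertible assms by auto
  have pIi: "pos_def (matrix_inv Gi)" and pIj: "pos_def (matrix_inv Gj)" using pd_inv assms by auto
  have pM: "pos_def M" unfolding M_def using pd_add pIi pIj by blast
  have pH: "pos_def H" unfolding H_def using pd_inv pM by blast
  have "pos_def (matrix_inv (matrix_inv Gi) - H)"
    unfolding H_def using antitone[OF pM pIi] pIj by (simp add: M_def)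
  then have AH: "pos_def (Gi - H)" by (simp only: inv_inv[OF iGi])
  have "pos_def (matrix_inv (matrix_inv Gj) - H)"
    unfolding H_def using antitone[OF pM pIj] pIi by (simp add: M_def)
  then have BH: "pos_def (Gj - H)" by (simp only: inv_inv[OF iGj])
  define xe where "xe = eq_mean w xi xj"
  define O1 where "O1 = outer (xe - xi) (xe - xi)"
  define O2 where "O2 = outer (xe - xj) (xe - xj)"
  have Cdef: "C = w *\<^sub>R (Gi + O1) + (1 - w) *\<^sub>R (Gj + O2)"
    by (simp add: C_def eq_cov_def xe_def O1_def O2_def Let_def)
  have sGi: "transpose Gi = Gi" and sGj: "transpose Gj = Gj" and sH: "transpose H = H"
    using assms pH by (auto simp: pos_def_def)
  have pCH: "pos_def (C - H)" unfolding pd_Q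
  proof (intro conjI allI impI)
    show "transpose (C - H) = C - H"
      by (simp add: Cdef transpose_diff transpose_add transpose_scalar O1_def O2_def
          transpose_outer sGi sGj sH)
    fix x :: "real^'n" assume x: "x \<noteq> 0"
    have a: "Q Gi x - Q H x > 0" using AH x by (simp add: pd_Q Q_diff)
    have b: "Q Gj x - Q H x > 0" using BH x by (simp add: pd_Q Q_diff)
    have o1: "Q O1 x \<ge> 0" and o2: "Q O2 x \<ge> 0" by (simp_all add: O1_def O2_def Q_outer)
    have e: "Q (C - H) x = w * (Q Gi x - Q H x) + (1 - w) * (Q Gj x - Q H x)
        + w * Q O1 x + (1 - w) * Q O2 x"
      by (simp add: Cdef Q_diff Q_add Q_scale algebra_simps)
    have "w * (Q Gi x - Q H x) + (1 - w) * (Q Gj x - Q H x) > 0"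
    proof (cases "w = 0")
      case True then show ?thesis using b by simp
    next
      case False then have "w > 0" using assms by simp
      then show ?thesis using a b assms
        by (smt (verit) mult_nonneg_nonneg mult_pos_pos)
    qed
    moreover have "w * Q O1 x \<ge> 0" "(1 - w) * Q O2 x \<ge> 0" using o1 o2 assms by simp_all
    ultimately show "Q (C - H) x > 0" using e by linarith
  qed
  have "C = H + (C - H)" by simp
  then have pC: "pos_def C" using pd_add[OF pH pCH] by metis
  have "pos_def (matrix_inv H - matrix_inv C)" using antitone[OF pC pH pCH] .
  moreover have "matrix_inv H = M" unfolding H_def using inv_inv pd_invertible pM by blast
  ultimately show ?thesis using pCH by (simp add: C_def H_def M_def)
qed

end
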